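(* In the worst case, the number of rounds until the myopic best-response dynamics described below converge is $\Omega(n)$: there is a constant $c>0$ such that for every $n$ there is an instance with $n$ users (nonnegative embedding weights, features, linear threshold classifier, scaled 2-norm cost) for which the dynamics require at least $cn$ rounds to converge.
   Context: Users $i$ have features $x_i\in\mathbb{R}^\ell$; embeddings $\phi(x_i;x_{-i})=\widetilde{w}_{ii}x_i+\sum_{j\neq i}\widetilde{w}_{ji}x_j$ with $\widetilde{w}_{ji}\ge0$. Classifier: $h_{\theta,b}(x_i;x_{-i})=\mathrm{sign}(\theta^\top\phi(x_i;x_{-i})+b)$, $\mathrm{sign}(0)=+1$. Cost $c_\beta(x,x')=\beta\|x-x'\|_2$, $\beta>0$. Dynamics: $x_i^{(0)}=x_i$; at each round all users update concurrently; user $i$ changes her features only if she is currently classified $-1$ and some $x'$ with $h(x';x_{-i})=+1$ (others' current features) has cost $\le2$ from her current features, in which case she moves to the minimum-cost such point; otherwise she stays. Convergence means reaching a round after which no user's features change. *)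

theory Defs
  imports Complex_Main
begin

text \<open>Vectors in R^l are represented as functions nat => real vanishing at
indices >= l. Users are indexed by 0..<n. A configuration X maps a user
to her current feature vector. W j i is the embedding weight w~_ji.\<close>

definition vecs :: "nat \<Rightarrow> (nat \<Rightarrow> real) set" where
  "vecs l = {v. \<forall>k\<ge>l. v k = 0}"

definition embed :: "nat \<Rightarrow> (nat \<Rightarrow> nat \<Rightarrow> real) \<Rightarrow> (nat \<Rightarrow> nat \<Rightarrow> real) \<Rightarrow> nat \<Rightarrow> (nat \<Rightarrow> real)" where
  "embed n W X i = (\<lambda>k. \<Sum>j<n. W j i * X j k)"

text \<open>Classified +1 iff theta^T phi + b >= 0 (sign 0 = +1).\<close>
definition positive :: "nat \<Rightarrow> nat \<Rightarrow> (nat \<Rightarrow> nat \<Rightarrow> real) \<Rightarrow> (nat \<Rightarrow> real) \<Rightarrow> real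
    \<Rightarrow> (nat \<Rightarrow> nat \<Rightarrow> real) \<Rightarrow> nat \<Rightarrow> bool" where
  "positive l n W \<theta> b X i \<longleftrightarrow> (\<Sum>k<l. \<theta> k * embed n W X i k) + b \<ge> 0"

definition cost :: "nat \<Rightarrow> real \<Rightarrow> (nat \<Rightarrow> real) \<Rightarrow> (nat \<Rightarrow> real) \<Rightarrow> real" where
  "cost l \<beta> x y = \<beta> * sqrt (\<Sum>k<l. (x k - y k)^2)"

definition feasible :: "nat \<Rightarrow> nat \<Rightarrow> (nat \<Rightarrow> nat \<Rightarrow> real) \<Rightarrow> (nat \<Rightarrow> real) \<Rightarrow> real
    \<Rightarrow> (nat \<Rightarrow> nat \<Rightarrow> real) \<Rightarrow> nat \<Rightarrow> (nat \<Rightarrow> real) \<Rightarrow> bool" where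
  "feasible l n W \<theta> b X i x' \<longleftrightarrow> x' \<in> vecs l \<and> positive l n W \<theta> b (X(i := x')) i"

definition br_step :: "nat \<Rightarrow> nat \<Rightarrow> (nat \<Rightarrow> nat \<Rightarrow> real) \<Rightarrow> (nat \<Rightarrow> real) \<Rightarrow> real \<Rightarrow> real
    \<Rightarrow> (nat \<Rightarrow> nat \<Rightarrow> real) \<Rightarrow> (nat \<Rightarrow> nat \<Rightarrow> real) \<Rightarrow> bool" where
  "br_step l n W \<theta> b \<beta> X Y \<longleftrightarrow>
     (\<forall>i. i \<ge> n \<longrightarrow> Y i = X i) \<and>
     (\<forall>i<n.
        if \<not> positive l n W \<theta> b X i \<and>
           (\<exists>x'. feasible l n W \<theta> b X i x' \<and> cost l \<beta> (X i) x' \<le> 2)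
        then is_arg_min (cost l \<beta> (X i)) (feasible l n W \<theta> b X i) (Y i)
        else Y i = X i)"

definition trajectory :: "nat \<Rightarrow> nat \<Rightarrow> (nat \<Rightarrow> nat \<Rightarrow> real) \<Rightarrow> (nat \<Rightarrow> real) \<Rightarrow> real \<Rightarrow> real
    \<Rightarrow> (nat \<Rightarrow> nat \<Rightarrow> real) \<Rightarrow> (nat \<Rightarrow> nat \<Rightarrow> nat \<Rightarrow> real) \<Rightarrow> bool" where
  "trajectory l n W \<theta> b \<beta> X0 Xs \<longleftrightarrow>
     Xs 0 = X0 \<and> (\<forall>t. br_step l n W \<theta> b \<beta> (Xs t) (Xs (Suc t)))"

definition converged_at :: "nat \<Rightarrow> (nat \<Rightarrow> nat \<Rightarrow> nat \<Rightarrow> real) \<Rightarrow> nat \<Rightarrow> bool" where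
  "converged_at n Xs T \<longleftrightarrow> (\<forall>t\<ge>T. \<forall>i<n. Xs (Suc t) i = Xs t i)"

end

theory Submission
  imports Defs
begin

definition W0 :: "nat \<Rightarrow> nat \<Rightarrow> real" where
  "W0 j i = (if j = i \<or> Suc j = i then 1 else 0)"
definition th0 :: "nat \<Rightarrow> real" where
  "th0 k = (if k = 0 then 1 else 0)"
definition zz :: "nat \<Rightarrow> real" where "zz = (\<lambda>_. 0)"
definition m2 :: "nat \<Rightarrow> real" where "m2 = (\<lambda>k. if k = 0 then -2 else 0)"
definition Z :: "nat \<Rightarrow> nat \<Rightarrow> nat \<Rightarrow> nat \<Rightarrow> real" where
  "Z n t i = (if i < n \<and> t \<le> i then m2 else zz)"

lemma emb:
  assumes "i < n"
  shows "embed n W0 X i 0 = X i 0 + (if 0 < i then X (i-1) 0 else 0)"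
proof -
  have "(\<Sum>j<n. W0 j i * X j 0) = (\<Sum>j<n. (if j = i then X j 0 else 0) + (if j = i - 1 \<and> 0 < i then X j 0 else 0))"
    by (rule sum.cong) (auto simp: W0_def)
  also have "\<dots> = X i 0 + (if 0 < i then X (i-1) 0 else 0)"
    using assms by (simp add: sum.distrib sum.If_cases)
  finally show ?thesis by (simp add: embed_def)
qed

lemma pos:
  assumes "i < n"
  shows "positive (Suc 0) n W0 th0 0 X i \<longleftrightarrow> X i 0 + (if 0 < i then X (i-1) 0 else 0) \<ge> 0"
  using assms by (simp add: positive_def th0_def emb)

lemma feas:
  assumes "i < n"
  shows "feasible (Suc 0) n W0 th0 0 X i x' \<longleftrightarrow> x' \<in> vecs 1 \<and> x' 0 + (if 0 < i then X (i-1) 0 else 0) \<ge> 0"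
  unfolding feasible_def pos[OF assms] using assms by simp

lemma cost1: "cost (Suc 0) 1 x y = \<bar>x 0 - y 0\<bar>"
  by (simp add: cost_def)

lemma vecs1: "v \<in> vecs (Suc 0) \<longleftrightarrow> v = (\<lambda>k. if k = 0 then v 0 else 0)"
  unfolding vecs_def by (auto simp: fun_eq_iff)

lemma user:
  assumes "i < n"
  shows "(if \<not> positive 1 n W0 th0 0 (Z n t) i \<and>
           (\<exists>x'. feasible 1 n W0 th0 0 (Z n t) i x' \<and> cost 1 1 (Z n t i) x' \<le> 2)
        then is_arg_min (cost 1 1 (Z n t i)) (feasible 1 n W0 th0 0 (Z n t) i) y
        else y = Z n t i) \<longleftrightarrow> y = Z n (Suc t) i"
proof -
  consider "i < t" | "i = t" | "t < i" by linarith
  then show ?thesis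
  proof cases
    case 1
    have p: "positive 1 n W0 th0 0 (Z n t) i"
      using assms 1 by (auto simp: pos Z_def zz_def m2_def)
    have "Z n (Suc t) i = Z n t i" using 1 by (simp add: Z_def)
    then show ?thesis using p by simp
  next
    case 2
    have q: "(if 0 < i then Z n t (i-1) 0 else 0) = 0" using 2 by (auto simp: Z_def zz_def)
    have np: "\<not> positive 1 n W0 th0 0 (Z n t) i"
      using assms 2 by (auto simp: pos Z_def zz_def m2_def)
    have fz: "feasible 1 n W0 th0 0 (Z n t) i zz"
      using assms 2 q by (auto simp: feas Z_def zz_def m2_def vecs_def)
    have cz: "cost 1 1 (Z n t i) zz = 2"
      using assms 2 by (auto simp: cost1 Z_def zz_def m2_def)
    have am: "is_arg_min (cost 1 1 (Z n t i)) (feasible 1 n W0 th0 0 (Z n t) i) y \<longleftrightarrow> y = zz"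
    proof
      assume h: "is_arg_min (cost 1 1 (Z n t i)) (feasible 1 n W0 th0 0 (Z n t) i) y"
      then have fy: "feasible 1 n W0 th0 0 (Z n t) i y" and ny: "\<not> cost 1 1 (Z n t i) zz < cost 1 1 (Z n t i) y"
        using fz by (auto simp: is_arg_min_def)
      from fy have "y \<in> vecs 1" "y 0 \<ge> 0" using assms 2 q by (auto simp: feas Z_def zz_def m2_def)
      moreover from ny have "\<bar>-2 - y 0\<bar> \<le> 2" using assms 2 by (auto simp: cost1 Z_def zz_def m2_def)
      ultimately have y0: "y 0 = 0" and yv: "\<forall>k\<ge>1. y k = 0" by (auto simp: vecs_def)
      show "y = zz"
      proof
        fix k show "y k = zz k" using y0 yv by (cases k) (auto simp: zz_def)
      qed
    next
      assume "y = zz"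
      then show "is_arg_min (cost 1 1 (Z n t i)) (feasible 1 n W0 th0 0 (Z n t) i) y"
        using assms 2 fz unfolding is_arg_min_def by (auto simp: feas cost1 Z_def zz_def m2_def)
    qed
    have "Z n (Suc t) i = zz" using 2 by (simp add: Z_def)
    then show ?thesis using np fz cz am by auto
  next
    case 3
    have nf: "\<not> (\<exists>x'. feasible 1 n W0 th0 0 (Z n t) i x' \<and> cost 1 1 (Z n t i) x' \<le> 2)"
      using assms 3 by (auto simp: feas cost1 Z_def zz_def m2_def)
    have "Z n (Suc t) i = Z n t i" using 3 by (simp add: Z_def)
    then show ?thesis using nf by auto
  qed
qed

lemma step: "br_step 1 n W0 th0 0 1 (Z n t) Y \<longleftrightarrow> Y = Z n (Suc t)"
proof -
  have "br_step 1 n W0 th0 0 1 (Z n t) Y \<longleftrightarrow> (\<forall>i. Y i = Z n (Suc t) i)"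
    unfolding br_step_def using user[of _ n t] by (auto simp: Z_def) (metis not_le)
  then show ?thesis by (auto simp: fun_eq_iff)
qed

lemma traj: "trajectory 1 n W0 th0 0 1 (Z n 0) Xs \<longleftrightarrow> Xs = Z n"
proof
  assume h: "trajectory 1 n W0 th0 0 1 (Z n 0) Xs"
  have "Xs t = Z n t" for t
  proof (induction t)
    case 0 then show ?case using h by (simp add: trajectory_def)
  next
    case (Suc t) then show ?case using h step by (metis trajectory_def)
  qed
  then show "Xs = Z n" by auto
next
  assume "Xs = Z n" then show "trajectory 1 n W0 th0 0 1 (Z n 0) Xs"
    unfolding trajectory_def using step by blast
qed

lemma inst: "\<exists>l::nat. \<exists>W \<theta> b \<beta> X0.
     l \<ge> 1 \<and> \<beta> > 0 \<and> (\<forall>i j. W j i \<ge> 0) \<and> \<theta> \<in> vecs l \<and>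
     (\<forall>i<n. X0 i \<in> vecs l) \<and> (\<forall>i\<ge>n. X0 i = (\<lambda>_. 0)) \<and>
     (\<exists>Xs. trajectory l n W \<theta> b \<beta> X0 Xs) \<and>
     (\<forall>Xs. trajectory l n W \<theta> b \<beta> X0 Xs \<longrightarrow>
        (\<exists>T. converged_at n Xs T) \<and>
        (\<forall>T. converged_at n Xs T \<longrightarrow> real T \<ge> 1 * real n))"
proof -
  have conv: "converged_at n (Z n) n" by (auto simp: converged_at_def Z_def)
  have lb: "real T \<ge> 1 * real n" if "converged_at n (Z n) T" for T
  proof (rule ccontr)
    assume "\<not> ?thesis"
    then have "T \<le> n - 1" "0 < n" by auto
    with that have "Z n (Suc (n-1)) (n-1) = Z n (n-1) (n-1)" by (auto simp: converged_at_def)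
    moreover have "Suc (n-1) = n" using \<open>0 < n\<close> by simp
    ultimately have "Z n n (n-1) 0 = Z n (n-1) (n-1) 0" by simp
    moreover have "\<not> n \<le> n - Suc 0" using \<open>0 < n\<close> by simp
    ultimately show False using \<open>0 < n\<close> by (simp add: Z_def zz_def m2_def)
  qed
  show ?thesis
    apply (rule exI[of _ 1], rule exI[of _ W0], rule exI[of _ th0], rule exI[of _ 0],
           rule exI[of _ 1], rule exI[of _ "Z n 0"])
    using conv lb traj[of n] by (auto simp: W0_def th0_def vecs_def Z_def zz_def m2_def simp del: One_nat_def)
qed


theorem corollary2:
  shows "\<exists>c::real. c > 0 \<and> (\<forall>n::nat. \<exists>l::nat. \<exists>W \<theta> b \<beta> X0.
     l \<ge> 1 \<and> \<beta> > 0 \<and> (\<forall>i j. W j i \<ge> 0) \<and> \<theta> \<in> vecs l \<and>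
     (\<forall>i<n. X0 i \<in> vecs l) \<and> (\<forall>i\<ge>n. X0 i = (\<lambda>_. 0)) \<and>
     (\<exists>Xs. trajectory l n W \<theta> b \<beta> X0 Xs) \<and>
     (\<forall>Xs. trajectory l n W \<theta> b \<beta> X0 Xs \<longrightarrow>
        (\<exists>T. converged_at n Xs T) \<and>
        (\<forall>T. converged_at n Xs T \<longrightarrow> real T \<ge> c * real n)))"
  by (rule exI[of _ "1::real"]) (simp only: inst, simp)

end
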